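(* Let $G$ be a self-similar group generated by a finite symmetric set $S$ of states of a bounded automaton over the alphabet $X=\{0,1\}$, acting transitively on every level $X^n$ of the binary tree, and assume all tile graphs $\Gamma_n'$ of $G$ are connected. Then for every $n\ge1$ the covering $\pi:\Gamma_{n+1}\to\Gamma_n$, $\pi(ux)=u$, is normal with Galois group $\mathrm{Gal}(\Gamma_{n+1}|\Gamma_n)\cong\Psi_G\cong \mathbb Z/2\mathbb Z$.
   Context: Self-similar action: $g(xw)=g(x)\,g|_x(w)$ with $g|_x\in G$. Root permutation $\psi_g\in\mathrm{Sym}(X)$: $x\mapsto g(x)$; $\Psi_G=\langle\psi_s:s\in S\rangle$. A finite invertible automaton is bounded if the number of directed paths of length $n$ in its Moore diagram avoiding the trivial state is bounded independently of $n$. Schreier graph $\Gamma_n$: vertex set $X^n$, for each $v\in X^n$, $s\in S$ an edge joining $v$ and $s(v)$ (edges from $s$ at $v$ and $s^{-1}$ at $s(v)$ identified). Tile graph $\Gamma_n'$: spanning subgraph of $\Gamma_n$ with the edges $\{v,s(v)\}$ such that $s|_v=\mathbb 1$. A $d$-sheeted unramified covering $\pi:\widetilde Y\to Y$ (surjective, locally bijective on neighbourhoods, fibres of size $d$) is normal (Galois) if there are $d$ automorphisms $\sigma$ of $\widetilde Y$ with $\pi\circ\sigma=\pi$; they form the Galois group. *)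

theory Defs
  imports "HOL-Algebra.Elementary_Groups"
begin

section \<open>Automata over the binary alphabet X = {0,1} (0 = False, 1 = True)\<close>

fun act :: "('q \<Rightarrow> bool \<Rightarrow> 'q) \<Rightarrow> ('q \<Rightarrow> bool \<Rightarrow> bool) \<Rightarrow> 'q \<Rightarrow> bool list \<Rightarrow> bool list" where
  "act tau lam q [] = []"
| "act tau lam q (x # w) = lam q x # act tau lam (tau q x) w"

fun delta :: "('q \<Rightarrow> bool \<Rightarrow> 'q) \<Rightarrow> 'q \<Rightarrow> bool list \<Rightarrow> 'q" where
  "delta tau q [] = q"
| "delta tau q (x # w) = delta tau (tau q x) w"

definition trivial_state :: "('q \<Rightarrow> bool \<Rightarrow> 'q) \<Rightarrow> ('q \<Rightarrow> bool \<Rightarrow> bool) \<Rightarrow> 'q \<Rightarrow> bool" where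
  "trivial_state tau lam q \<longleftrightarrow> (\<forall>w. act tau lam q w = w)"

definition invertible_automaton :: "'q set \<Rightarrow> ('q \<Rightarrow> bool \<Rightarrow> 'q) \<Rightarrow> ('q \<Rightarrow> bool \<Rightarrow> bool) \<Rightarrow> bool" where
  "invertible_automaton Q tau lam \<longleftrightarrow>
     finite Q \<and> (\<forall>q\<in>Q. \<forall>x. tau q x \<in> Q) \<and> (\<forall>q\<in>Q. bij (lam q))"

text \<open>Directed paths of length n in the Moore diagram avoiding the trivial state:
  a start state q and an input word w of length n such that all n+1 visited states are nontrivial.\<close>

definition nontrivial_paths :: "'q set \<Rightarrow> ('q \<Rightarrow> bool \<Rightarrow> 'q) \<Rightarrow> ('q \<Rightarrow> bool \<Rightarrow> bool) \<Rightarrow> nat \<Rightarrow> ('q \<times> bool list) set" where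
  "nontrivial_paths Q tau lam n = {(q, w). q \<in> Q \<and> length w = n \<and>
      (\<forall>i\<le>n. \<not> trivial_state tau lam (delta tau q (take i w)))}"

definition bounded_automaton :: "'q set \<Rightarrow> ('q \<Rightarrow> bool \<Rightarrow> 'q) \<Rightarrow> ('q \<Rightarrow> bool \<Rightarrow> bool) \<Rightarrow> bool" where
  "bounded_automaton Q tau lam \<longleftrightarrow> invertible_automaton Q tau lam \<and>
     (\<exists>C. \<forall>n. card (nontrivial_paths Q tau lam n) \<le> C)"

text \<open>Section g|_v of a tree automorphism g at the word v: g(v w) = g(v) g|_v(w).\<close>
definition sec :: "(bool list \<Rightarrow> bool list) \<Rightarrow> bool list \<Rightarrow> (bool list \<Rightarrow> bool list)" where
  "sec g v = (\<lambda>w. drop (length v) (g (v @ w)))"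

inductive_set gen_group :: "(bool list \<Rightarrow> bool list) set \<Rightarrow> (bool list \<Rightarrow> bool list) set"
  for S where
  gen_id: "id \<in> gen_group S"
| gen_step: "s \<in> S \<Longrightarrow> g \<in> gen_group S \<Longrightarrow> s \<circ> g \<in> gen_group S"

definition self_similar :: "(bool list \<Rightarrow> bool list) set \<Rightarrow> bool" where
  "self_similar G \<longleftrightarrow> (\<forall>g\<in>G. \<forall>v. sec g v \<in> G)"

definition level_transitive :: "(bool list \<Rightarrow> bool list) set \<Rightarrow> bool" where
  "level_transitive G \<longleftrightarrow> (\<forall>u v. length u = length v \<longrightarrow> (\<exists>g\<in>G. g u = v))"

definition root_perm :: "(bool list \<Rightarrow> bool list) \<Rightarrow> bool \<Rightarrow> bool" where
  "root_perm g = (\<lambda>x. hd (g [x]))"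

inductive_set Psi_set :: "(bool list \<Rightarrow> bool list) set \<Rightarrow> (bool \<Rightarrow> bool) set"
  for S where
  psi_id: "id \<in> Psi_set S"
| psi_step: "s \<in> S \<Longrightarrow> p \<in> Psi_set S \<Longrightarrow> root_perm s \<circ> p \<in> Psi_set S"

definition Psi_group :: "(bool list \<Rightarrow> bool list) set \<Rightarrow> (bool \<Rightarrow> bool) monoid" where
  "Psi_group S = \<lparr>carrier = Psi_set S, mult = (\<circ>), one = id\<rparr>"

section \<open>Graphs with darts (edges = orbits of the involution rev; fixed points = semi-edges)\<close>

record ('v, 'd) dgraph =
  verts :: "'v set"
  darts :: "'d set"
  orig  :: "'d \<Rightarrow> 'v"
  rev   :: "'d \<Rightarrow> 'd"

definition schreier :: "(bool list \<Rightarrow> bool list) set \<Rightarrow> nat \<Rightarrow> (bool list, (bool list \<Rightarrow> bool list) \<times> bool list) dgraph" where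
  "schreier S n = \<lparr>verts = {w. length w = n}, darts = S \<times> {w. length w = n},
      orig = snd, rev = (\<lambda>(s, v). (inv_into UNIV s, s v))\<rparr>"

definition tile_edges :: "(bool list \<Rightarrow> bool list) set \<Rightarrow> nat \<Rightarrow> (bool list \<times> bool list) set" where
  "tile_edges S n = {(u, v). length u = n \<and> (\<exists>s\<in>S. s u = v \<and> sec s u = id)}"

definition tile_connected :: "(bool list \<Rightarrow> bool list) set \<Rightarrow> nat \<Rightarrow> bool" where
  "tile_connected S n \<longleftrightarrow>
     (\<forall>u v. length u = n \<longrightarrow> length v = n \<longrightarrow> (u, v) \<in> (tile_edges S n)\<^sup>*)"

definition is_covering :: "('v1, 'd1) dgraph \<Rightarrow> ('v2, 'd2) dgraph \<Rightarrow> ('v1 \<Rightarrow> 'v2) \<Rightarrow> ('d1 \<Rightarrow> 'd2) \<Rightarrow> nat \<Rightarrow> bool" where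
  "is_covering Y' Y pV pD d \<longleftrightarrow>
     pV \<in> verts Y' \<rightarrow> verts Y \<and> pD \<in> darts Y' \<rightarrow> darts Y \<and>
     pV ` verts Y' = verts Y \<and> pD ` darts Y' = darts Y \<and>
     (\<forall>e\<in>darts Y'. orig Y (pD e) = pV (orig Y' e) \<and> rev Y (pD e) = pD (rev Y' e)) \<and>
     (\<forall>v\<in>verts Y'. bij_betw pD {e\<in>darts Y'. orig Y' e = v} {e\<in>darts Y. orig Y e = pV v}) \<and>
     (\<forall>u\<in>verts Y. card {v\<in>verts Y'. pV v = u} = d)"

definition deck_transformations :: "('v1, 'd1) dgraph \<Rightarrow> ('v1 \<Rightarrow> 'v2) \<Rightarrow> ('d1 \<Rightarrow> 'd2) \<Rightarrow> (('v1 \<Rightarrow> 'v1) \<times> ('d1 \<Rightarrow> 'd1)) set" where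
  "deck_transformations Y' pV pD = {(f, g).
     f \<in> extensional (verts Y') \<and> g \<in> extensional (darts Y') \<and>
     bij_betw f (verts Y') (verts Y') \<and> bij_betw g (darts Y') (darts Y') \<and>
     (\<forall>e\<in>darts Y'. orig Y' (g e) = f (orig Y' e) \<and> rev Y' (g e) = g (rev Y' e)) \<and>
     (\<forall>v\<in>verts Y'. pV (f v) = pV v) \<and> (\<forall>e\<in>darts Y'. pD (g e) = pD e)}"

definition is_normal_covering :: "('v1, 'd1) dgraph \<Rightarrow> ('v2, 'd2) dgraph \<Rightarrow> ('v1 \<Rightarrow> 'v2) \<Rightarrow> ('d1 \<Rightarrow> 'd2) \<Rightarrow> nat \<Rightarrow> bool" where
  "is_normal_covering Y' Y pV pD d \<longleftrightarrow>
     is_covering Y' Y pV pD d \<and> card (deck_transformations Y' pV pD) = d"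

definition galois_group :: "('v1, 'd1) dgraph \<Rightarrow> ('v1 \<Rightarrow> 'v2) \<Rightarrow> ('d1 \<Rightarrow> 'd2) \<Rightarrow> (('v1 \<Rightarrow> 'v1) \<times> ('d1 \<Rightarrow> 'd1)) monoid" where
  "galois_group Y' pV pD = \<lparr>carrier = deck_transformations Y' pV pD,
      mult = (\<lambda>a b. (compose (verts Y') (fst a) (fst b), compose (darts Y') (snd a) (snd b))),
      one = (restrict id (verts Y'), restrict id (darts Y'))\<rparr>"

definition proj_V :: "bool list \<Rightarrow> bool list" where
  "proj_V w = butlast w"

definition proj_D :: "(bool list \<Rightarrow> bool list) \<times> bool list \<Rightarrow> (bool list \<Rightarrow> bool list) \<times> bool list" where
  "proj_D e = (fst e, butlast (snd e))"

end

theory Submission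
  imports Defs
begin

definition flip :: "bool list \<Rightarrow> bool list" where
  "flip w = butlast w @ [\<not> last w]"

lemma flip_len[simp]: "w \<noteq> [] \<Longrightarrow> length (flip w) = length w"
  by (simp add: flip_def)

lemma flip_butlast[simp]: "butlast (flip w) = butlast w"
  by (simp add: flip_def)

lemma flip_flip[simp]: "w \<noteq> [] \<Longrightarrow> flip (flip w) = w"
  by (simp add: flip_def)

lemma flip_neq: "w \<noteq> [] \<Longrightarrow> flip w \<noteq> w"
  by (metis flip_def append_butlast_last_id last_snoc)

lemma same_butlast:
  assumes "length a = length b" "a \<noteq> []" "butlast a = butlast b"
  shows "a = b \<or> a = flip b"
proof -
  have b: "b \<noteq> []" using assms by auto
  have a1: "a = butlast b @ [last a]" using assms by (metis append_butlast_last_id)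
  have b1: "b = butlast b @ [last b]" using b by simp
  show ?thesis
  proof (cases "last a = last b")
    case True then show ?thesis using a1 b1 by simp
  next
    case False then have "last a = (\<not> last b)" by auto
    then show ?thesis using a1 unfolding flip_def by simp
  qed
qed

lemma act_len[simp]: "length (act tau lam q w) = length w"
  by (induction w arbitrary: q) auto

lemma act_append: "act tau lam q (u @ w) = act tau lam q u @ act tau lam (delta tau q u) w"
  by (induction u arbitrary: q) auto

lemma delta_in: "q \<in> Q \<Longrightarrow> \<forall>q\<in>Q. \<forall>x. tau q x \<in> Q \<Longrightarrow> delta tau q u \<in> Q"
  by (induction u arbitrary: q) auto

lemma bool_bij: "bij (f :: bool \<Rightarrow> bool) \<Longrightarrow> f = id \<or> f = Not"
proof -
  assume "bij f"
  then have "f True \<noteq> f False" by (metis bij_def inj_eq) 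
  then show ?thesis by (cases "f True"; cases "f False") (auto simp: fun_eq_iff, (metis (full_types))+)
qed

lemma act_flip:
  assumes inv: "invertible_automaton Q tau lam" and q: "q \<in> Q" and w: "w \<noteq> []"
  shows "act tau lam q (flip w) = flip (act tau lam q w)"
proof -
  obtain u x where wu: "w = u @ [x]" using w by (metis append_butlast_last_id)
  define p where "p = delta tau q u"
  have "p \<in> Q" using delta_in[of q Q tau u] q inv unfolding p_def invertible_automaton_def by auto
  then have "bij (lam p)" using inv unfolding invertible_automaton_def by auto
  then have "lam p = id \<or> lam p = Not" by (rule bool_bij)
  then have "lam p (\<not> x) = (\<not> lam p x)" by auto
  then show ?thesis unfolding wu flip_def act_append p_def by simp
qed

lemma gen_len:
  "k \<in> gen_group S \<Longrightarrow> \<forall>s\<in>S. \<forall>w. length (s w) = length w \<Longrightarrow> length (k w) = length w"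
  by (induction k rule: gen_group.induct) auto

lemma gen_flip:
  assumes "k \<in> gen_group S" "\<forall>s\<in>S. \<forall>w. length (s w) = length w"
    "\<forall>s\<in>S. \<forall>w. w \<noteq> [] \<longrightarrow> s (flip w) = flip (s w)"
  shows "w \<noteq> [] \<Longrightarrow> k (flip w) = flip (k w)"
  using assms
proof (induction k arbitrary: w rule: gen_group.induct)
  case gen_id then show ?case by simp
next
  case (gen_step s g)
  have "g w \<noteq> []" using gen_len[OF gen_step(2)] gen_step by (metis length_0_conv)
  then show ?case using gen_step by simp
qed

definition two_elt :: "('a, 'b) monoid_scheme \<Rightarrow> 'a \<Rightarrow> 'a \<Rightarrow> bool" where
  "two_elt M a b \<longleftrightarrow> carrier M = {a, b} \<and> a \<noteq> b \<and> a \<otimes>\<^bsub>M\<^esub> a = a \<and>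
     a \<otimes>\<^bsub>M\<^esub> b = b \<and> b \<otimes>\<^bsub>M\<^esub> a = b \<and> b \<otimes>\<^bsub>M\<^esub> b = a"

lemma two_elt_iso:
  assumes "two_elt M a b" "two_elt N c d"
  shows "M \<cong> N"
proof (rule is_isoI)
  let ?h = "\<lambda>x. if x = a then c else d"
  show "?h \<in> iso M N"
    using assms unfolding iso_def hom_def two_elt_def bij_betw_def inj_on_def
    by auto
qed


lemma deck_eq:
  fixes S :: "(bool list \<Rightarrow> bool list) set" and n :: nat
  assumes lenS: "\<forall>s\<in>S. \<forall>w. length (s w) = length w"
    and flipS: "\<forall>s\<in>S. \<forall>w. w \<noteq> [] \<longrightarrow> s (flip w) = flip (s w)"
    and symm: "\<forall>s\<in>S. inv_into UNIV s \<in> S"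
    and trans: "\<forall>u v. length u = length v \<longrightarrow> (\<exists>k\<in>gen_group S. k u = v)"
  defines "V \<equiv> {w::bool list. length w = Suc n}"
    and "D \<equiv> S \<times> {w::bool list. length w = Suc n}"
  shows "deck_transformations (schreier S (Suc n)) proj_V proj_D =
     {(restrict id V, restrict id D),
      (restrict flip V, restrict (\<lambda>e. (fst e, flip (snd e))) D)}"
proof
  have sch0: "schreier S (Suc n) = \<lparr>verts = V, darts = D, orig = snd,
      rev = (\<lambda>(s, v). (inv_into UNIV s, s v))\<rparr>"
    by (simp add: schreier_def V_def D_def)
  show "deck_transformations (schreier S (Suc n)) proj_V proj_D
    \<subseteq> {(restrict id V, restrict id D),
      (restrict flip V, restrict (\<lambda>e. (fst e, flip (snd e))) D)}"
  proof
    fix x assume xd: "x \<in> deck_transformations (schreier S (Suc n)) proj_V proj_D"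
    obtain f g where x: "x = (f, g)" by fastforce
    have fe: "f \<in> extensional V" and ge: "g \<in> extensional D"
      and fb: "bij_betw f V V" and gb: "bij_betw g D D"
      and og: "\<forall>e\<in>D. snd (g e) = f (snd e) \<and>
          (\<lambda>(s, v). (inv_into UNIV s, s v)) (g e) = g ((\<lambda>(s, v). (inv_into UNIV s, s v)) e)"
      and pv: "\<forall>v\<in>V. butlast (f v) = butlast v"
      and pd: "\<forall>e\<in>D. proj_D (g e) = proj_D e"
      using xd unfolding x deck_transformations_def sch0 proj_V_def
      by (simp_all add: mem_Collect_eq)
    have gform: "g e = (fst e, f (snd e))" if "e \<in> D" for e
    proof -
      have "fst (g e) = fst e" using pd that unfolding proj_D_def by auto
      moreover have "snd (g e) = f (snd e)" using og that by auto
      ultimately show ?thesis by (metis prod.collapse)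
    qed
    have comm: "f (s v) = s (f v)" if "s \<in> S" "v \<in> V" for s v
    proof -
      have e: "(s, v) \<in> D" using that unfolding D_def V_def by auto
      have r: "(inv_into UNIV s, s v) \<in> D" using that symm lenS unfolding D_def V_def by auto
      have "(\<lambda>(s, v). (inv_into UNIV s, s v)) (g (s, v)) = g (inv_into UNIV s, s v)"
        using og e by auto
      then show ?thesis using gform[OF e] gform[OF r] by simp
    qed
    have commG: "f (k v) = k (f v)" if "k \<in> gen_group S" "v \<in> V" for k v
      using that
    proof (induction k rule: gen_group.induct)
      case gen_id then show ?case by simp
    next
      case (gen_step s k)
      have "k v \<in> V" using gen_len[OF gen_step(2) lenS] gen_step unfolding V_def by auto
      then show ?case using gen_step comm by simp
    qed
    have eV: "e \<in> D \<Longrightarrow> snd e \<in> V" for e unfolding D_def V_def by auto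
    define v0 where "v0 = replicate (Suc n) False"
    have v0V: "v0 \<in> V" unfolding v0_def V_def by simp
    have fv0: "f v0 \<in> V" using bij_betw_apply[OF fb v0V] .
    have b1: "butlast (f v0) = butlast v0" using pv v0V by blast
    have b2: "length (f v0) = length v0" using fv0 v0V unfolding V_def by simp
    have b3: "f v0 \<noteq> []" using fv0 unfolding V_def by auto
    have "f v0 = v0 \<or> f v0 = flip v0"
      using same_butlast[OF b2 b3 b1] .
    then show "x \<in> {(restrict id V, restrict id D),
      (restrict flip V, restrict (\<lambda>e. (fst e, flip (snd e))) D)}"
    proof
      assume h: "f v0 = v0"
      have fv: "f v = v" if "v \<in> V" for v
      proof -
        have "length v0 = length v" using that v0V unfolding V_def by simp
        then obtain k where k: "k \<in> gen_group S" "k v0 = v"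
          using trans by blast
        show ?thesis using commG[OF k(1) v0V] h k by simp
      qed
      have "f = restrict id V"
      proof (rule extensionalityI[OF fe])
        show "restrict id V \<in> extensional V" by simp
        fix v assume "v \<in> V" then show "f v = restrict id V v" using fv by simp
      qed
      moreover have "g = restrict id D"
      proof (rule extensionalityI[OF ge])
        show "restrict id D \<in> extensional D" by simp
        fix e assume e: "e \<in> D"
        then have "snd e \<in> V" using eV by blast
        then show "g e = restrict id D e" using fv gform[OF e] e by simp
      qed
      ultimately show ?thesis unfolding x by simp
    next
      assume h: "f v0 = flip v0"
      have fv: "f v = flip v" if "v \<in> V" for v
      proof -
        have "length v0 = length v" using that v0V unfolding V_def by simp
        then obtain k where k: "k \<in> gen_group S" "k v0 = v"
          using trans by blast
        have "k (flip v0) = flip (k v0)"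
          using gen_flip[OF k(1) lenS flipS] v0_def by simp
        then show ?thesis using commG[OF k(1) v0V] h k by simp
      qed
      have "f = restrict flip V"
      proof (rule extensionalityI[OF fe])
        show "restrict flip V \<in> extensional V" by simp
        fix v assume "v \<in> V" then show "f v = restrict flip V v" using fv by simp
      qed
      moreover have "g = restrict (\<lambda>e. (fst e, flip (snd e))) D"
      proof (rule extensionalityI[OF ge])
        show "restrict (\<lambda>e. (fst e, flip (snd e))) D \<in> extensional D" by simp
        fix e assume e: "e \<in> D"
        then have "snd e \<in> V" using eV by blast
        then show "g e = restrict (\<lambda>e. (fst e, flip (snd e))) D e" using fv gform[OF e] e by simp
      qed
      ultimately show ?thesis unfolding x by simp
    qed
  qed
next
  have invol: "bij_betw h A A" if "\<forall>x\<in>A. h x \<in> A \<and> h (h x) = x" for h :: "'z \<Rightarrow> 'z" and A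
    by (rule bij_betw_byWitness[where f'=h]) (use that in auto)
  have nn: "w \<in> V \<Longrightarrow> w \<noteq> []" for w unfolding V_def by auto
  have sV: "s \<in> S \<Longrightarrow> v \<in> V \<Longrightarrow> s v \<in> V" for s v using lenS unfolding V_def by auto
  have sch: "schreier S (Suc n) = \<lparr>verts = V, darts = D, orig = snd,
      rev = (\<lambda>(s, v). (inv_into UNIV s, s v))\<rparr>"
    by (simp add: schreier_def V_def D_def)
  have dV: "e \<in> D \<Longrightarrow> fst e \<in> S \<and> snd e \<in> V" for e unfolding D_def V_def by auto
  have Dd: "s \<in> S \<Longrightarrow> v \<in> V \<Longrightarrow> (s, v) \<in> D" for s v unfolding D_def V_def by auto
  have flV: "v \<in> V \<Longrightarrow> flip v \<in> V" for v unfolding V_def by (simp add: flip_def)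
  have I: "(restrict id V, restrict id D) \<in> deck_transformations (schreier S (Suc n)) proj_V proj_D"
  proof -
    have "bij_betw (restrict id V) V V" by (rule invol) auto
    moreover have "bij_betw (restrict id D) D D" by (rule invol) auto
    moreover have "\<forall>e\<in>D. snd (restrict id D e) = restrict id V (snd e) \<and>
          (\<lambda>(s, v). (inv_into UNIV s, s v)) (restrict id D e) =
           restrict id D ((\<lambda>(s, v). (inv_into UNIV s, s v)) e)"
    proof
      fix e assume e: "e \<in> D"
      obtain s v where ev: "e = (s, v)" by fastforce
      have "s \<in> S" "v \<in> V" using dV e ev by auto
      then have "(inv_into UNIV s, s v) \<in> D" using Dd symm sV by auto
      then show "snd (restrict id D e) = restrict id V (snd e) \<and>
          (\<lambda>(s, v). (inv_into UNIV s, s v)) (restrict id D e) =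
           restrict id D ((\<lambda>(s, v). (inv_into UNIV s, s v)) e)"
        using e ev dV by auto
    qed
    ultimately show ?thesis unfolding deck_transformations_def sch
      by (simp add: proj_V_def)
  qed
  have F: "(restrict flip V, restrict (\<lambda>e. (fst e, flip (snd e))) D)
     \<in> deck_transformations (schreier S (Suc n)) proj_V proj_D"
  proof -
    have "bij_betw (restrict flip V) V V" by (rule invol) (auto simp: flV nn)
    moreover have "bij_betw (restrict (\<lambda>e. (fst e, flip (snd e))) D) D D"
      by (rule invol) (auto simp: flV nn dV Dd)
    moreover have "\<forall>e\<in>D. snd (restrict (\<lambda>e. (fst e, flip (snd e))) D e) = restrict flip V (snd e) \<and>
          (\<lambda>(s, v). (inv_into UNIV s, s v)) (restrict (\<lambda>e. (fst e, flip (snd e))) D e) =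
           restrict (\<lambda>e. (fst e, flip (snd e))) D ((\<lambda>(s, v). (inv_into UNIV s, s v)) e)"
    proof
      fix e assume e: "e \<in> D"
      obtain s v where ev: "e = (s, v)" by fastforce
      have sv: "s \<in> S" "v \<in> V" using dV e ev by auto
      then have "(inv_into UNIV s, s v) \<in> D" using Dd symm sV by auto
      moreover have "s (flip v) = flip (s v)" using flipS sv nn by auto
      ultimately show "snd (restrict (\<lambda>e. (fst e, flip (snd e))) D e) = restrict flip V (snd e) \<and>
          (\<lambda>(s, v). (inv_into UNIV s, s v)) (restrict (\<lambda>e. (fst e, flip (snd e))) D e) =
           restrict (\<lambda>e. (fst e, flip (snd e))) D ((\<lambda>(s, v). (inv_into UNIV s, s v)) e)"
        using e ev sv by auto
    qed
    moreover have "\<forall>e\<in>D. proj_D (restrict (\<lambda>e. (fst e, flip (snd e))) D e) = proj_D e"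
      by (auto simp: proj_D_def)
    ultimately show ?thesis unfolding deck_transformations_def sch
      by (simp add: proj_V_def)
  qed
  show "{(restrict id V, restrict id D),
      (restrict flip V, restrict (\<lambda>e. (fst e, flip (snd e))) D)}
    \<subseteq> deck_transformations (schreier S (Suc n)) proj_V proj_D"
    using I F by auto
qed


lemma act_butlast: "act tau lam q (butlast w) = butlast (act tau lam q w)"
proof (cases "w = []")
  case True then show ?thesis by simp
next
  case False
  then have "w = butlast w @ [last w]" by simp
  then have "act tau lam q w = act tau lam q (butlast w) @ act tau lam (delta tau q (butlast w)) [last w]"
    by (metis act_append)
  then show ?thesis by simp
qed

lemma fibre2:
  fixes u :: "bool list"
  assumes "length u = n"
  shows "card {v. length v = Suc n \<and> butlast v = u} = 2"
proof -
  have "{v. length v = Suc n \<and> butlast v = u} = {u @ [True], u @ [False]}"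
  proof (rule Set.set_eqI)
    fix v
    show "v \<in> {v. length v = Suc n \<and> butlast v = u} \<longleftrightarrow> v \<in> {u @ [True], u @ [False]}"
    proof
      assume "v \<in> {v. length v = Suc n \<and> butlast v = u}"
      then have "length v = Suc n" "butlast v = u" by auto
      then have "v = u @ [last v]" by (metis append_butlast_last_id list.size(3) nat.simps(3))
      then show "v \<in> {u @ [True], u @ [False]}" by (cases "last v") auto
    next
      assume "v \<in> {u @ [True], u @ [False]}"
      then show "v \<in> {v. length v = Suc n \<and> butlast v = u}" using assms by auto
    qed
  qed
  then show ?thesis by simp
qed

lemma covering:
  fixes S :: "(bool list \<Rightarrow> bool list) set" and n :: nat
  assumes butS: "\<forall>s\<in>S. \<forall>w. s (butlast w) = butlast (s w)"
  shows "is_covering (schreier S (Suc n)) (schreier S n) proj_V proj_D 2"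
  unfolding is_covering_def
proof (intro conjI)
  show "proj_V \<in> verts (schreier S (Suc n)) \<rightarrow> verts (schreier S n)"
    by (auto simp: schreier_def proj_V_def)
  show "proj_D \<in> darts (schreier S (Suc n)) \<rightarrow> darts (schreier S n)"
    by (auto simp: schreier_def proj_D_def)
  show "proj_V ` verts (schreier S (Suc n)) = verts (schreier S n)"
  proof
    show "proj_V ` verts (schreier S (Suc n)) \<subseteq> verts (schreier S n)"
      by (auto simp: schreier_def proj_V_def)
    show "verts (schreier S n) \<subseteq> proj_V ` verts (schreier S (Suc n))"
    proof
      fix u assume "u \<in> verts (schreier S n)"
      then have "length (u @ [True]) = Suc n" "proj_V (u @ [True]) = u"
        by (auto simp: schreier_def proj_V_def)
      then show "u \<in> proj_V ` verts (schreier S (Suc n))"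
        by (metis (mono_tags, lifting) dgraph.select_convs(1) image_eqI mem_Collect_eq schreier_def)
    qed
  qed
  show "proj_D ` darts (schreier S (Suc n)) = darts (schreier S n)"
  proof
    show "proj_D ` darts (schreier S (Suc n)) \<subseteq> darts (schreier S n)"
      by (auto simp: schreier_def proj_D_def)
    show "darts (schreier S n) \<subseteq> proj_D ` darts (schreier S (Suc n))"
    proof
      fix e assume e: "e \<in> darts (schreier S n)"
      obtain s u where eu: "e = (s, u)" by fastforce
      have "s \<in> S" "length u = n" using e eu by (auto simp: schreier_def)
      then have "(s, u @ [True]) \<in> darts (schreier S (Suc n))" "proj_D (s, u @ [True]) = e"
        by (auto simp: schreier_def proj_D_def eu)
      then show "e \<in> proj_D ` darts (schreier S (Suc n))" by (metis image_eqI)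
    qed
  qed
  show "\<forall>e\<in>darts (schreier S (Suc n)).
     orig (schreier S n) (proj_D e) = proj_V (orig (schreier S (Suc n)) e) \<and>
     rev (schreier S n) (proj_D e) = proj_D (rev (schreier S (Suc n)) e)"
  proof
    fix e assume e: "e \<in> darts (schreier S (Suc n))"
    obtain s v where ev: "e = (s, v)" by fastforce
    have "s \<in> S" using e ev by (auto simp: schreier_def)
    then have "s (butlast v) = butlast (s v)" using butS by blast
    then show "orig (schreier S n) (proj_D e) = proj_V (orig (schreier S (Suc n)) e) \<and>
     rev (schreier S n) (proj_D e) = proj_D (rev (schreier S (Suc n)) e)"
      by (simp add: schreier_def proj_D_def proj_V_def ev)
  qed
  show "\<forall>v\<in>verts (schreier S (Suc n)).
       bij_betw proj_D {e \<in> darts (schreier S (Suc n)). orig (schreier S (Suc n)) e = v}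
        {e \<in> darts (schreier S n). orig (schreier S n) e = proj_V v}"
  proof
    fix v assume v: "v \<in> verts (schreier S (Suc n))"
    then have lv: "length v = Suc n" by (simp add: schreier_def)
    show "bij_betw proj_D {e \<in> darts (schreier S (Suc n)). orig (schreier S (Suc n)) e = v}
        {e \<in> darts (schreier S n). orig (schreier S n) e = proj_V v}"
    proof (rule bij_betw_byWitness[where f'="\<lambda>e. (fst e, v)"])
      show "\<forall>a\<in>{e \<in> darts (schreier S (Suc n)). orig (schreier S (Suc n)) e = v}.
          (fst (proj_D a), v) = a"
        by (auto simp: schreier_def proj_D_def)
      show "\<forall>a'\<in>{e \<in> darts (schreier S n). orig (schreier S n) e = proj_V v}.
          proj_D (fst a', v) = a'"
        by (auto simp: schreier_def proj_D_def proj_V_def)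
      show "proj_D ` {e \<in> darts (schreier S (Suc n)). orig (schreier S (Suc n)) e = v}
          \<subseteq> {e \<in> darts (schreier S n). orig (schreier S n) e = proj_V v}"
        by (auto simp: schreier_def proj_D_def proj_V_def)
      show "(\<lambda>e. (fst e, v)) ` {e \<in> darts (schreier S n). orig (schreier S n) e = proj_V v}
          \<subseteq> {e \<in> darts (schreier S (Suc n)). orig (schreier S (Suc n)) e = v}"
        using lv by (auto simp: schreier_def)
    qed
  qed
  show "\<forall>u\<in>verts (schreier S n). card {v \<in> verts (schreier S (Suc n)). proj_V v = u} = 2"
    using fibre2 by (auto simp: schreier_def proj_V_def)
qed


lemma comp_bool: "a \<in> {id, Not} \<Longrightarrow> b \<in> {id, Not} \<Longrightarrow> (a \<circ> b) \<in> {id, Not :: bool \<Rightarrow> bool}"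
proof -
  have "Not \<circ> Not = id" by (simp add: fun_eq_iff)
  then show "a \<in> {id, Not} \<Longrightarrow> b \<in> {id, Not} \<Longrightarrow> (a \<circ> b) \<in> {id, Not :: bool \<Rightarrow> bool}"
    by auto
qed

lemma psi_set:
  assumes inv: "invertible_automaton Q tau lam"
    and states: "\<forall>s\<in>S. \<exists>q\<in>Q. s = act tau lam q"
    and trans: "\<forall>u v. length u = length v \<longrightarrow> (\<exists>k\<in>gen_group S. k u = v)"
  shows "Psi_set S = {id, Not}"
proof
  have rp: "root_perm s = id \<or> root_perm s = Not" if sS: "s \<in> S" for s
  proof -
    obtain q where qQ: "q \<in> Q" and sq: "s = act tau lam q" using bspec[OF states sS] by blast
    have rl: "root_perm s = lam q" unfolding sq root_perm_def by (rule ext) simp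
    have "bij (lam q)" using inv qQ unfolding invertible_automaton_def by blast
    then have "lam q = id \<or> lam q = Not" by (rule bool_bij)
    then show ?thesis unfolding rl .
  qed
  show "Psi_set S \<subseteq> {id, Not}"
  proof
    fix p assume "p \<in> Psi_set S"
    then show "p \<in> {id, Not}"
    proof (induction p rule: Psi_set.induct)
      case psi_id then show ?case by simp
    next
      case (psi_step s p)
      have "root_perm s \<in> {id, Not}" using rp[OF psi_step(1)] by simp
      then show ?case using psi_step.IH by (rule comp_bool)
    qed
  qed
  have gk: "\<exists>p\<in>Psi_set S. \<forall>x. k [x] = [p x]" if "k \<in> gen_group S" for k
    using that
  proof (induction k rule: gen_group.induct)
    case gen_id
    have "id \<in> Psi_set S" by (rule Psi_set.psi_id)
    then show ?case by (intro bexI[of _ id]) auto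
  next
    case (gen_step s k)
    then obtain p where p: "p \<in> Psi_set S" "\<forall>x. k [x] = [p x]" by blast
    obtain q where q: "q \<in> Q" "s = act tau lam q" using bspec[OF states gen_step(1)] by blast
    have "root_perm s \<circ> p \<in> Psi_set S" using Psi_set.psi_step[OF gen_step(1) p(1)] .
    moreover have "\<forall>x. (s \<circ> k) [x] = [(root_perm s \<circ> p) x]"
      using p q by (simp add: root_perm_def)
    ultimately show ?case by blast
  qed
  have "length [False] = length [True]" by simp
  then obtain k where k: "k \<in> gen_group S" "k [False] = [True]" using trans by blast
  then obtain p where p0: "p \<in> Psi_set S" "\<forall>x. k [x] = [p x]" using gk by blast
  have p: "p \<in> Psi_set S" "p False = True" using p0 k by auto
  have "p = Not"
  proof -
    have "p \<in> {id, Not}" using p(1) \<open>Psi_set S \<subseteq> {id, Not}\<close> by blast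
    then show ?thesis using p(2) by auto
  qed
  then show "{id, Not} \<subseteq> Psi_set S" using p(1) Psi_set.psi_id by blast
qed

lemma two_elt_psi: "Psi_set S = {id, Not} \<Longrightarrow> two_elt (Psi_group S) id Not"
  by (auto simp: two_elt_def Psi_group_def fun_eq_iff)

lemma two_elt_Z2: "two_elt (integer_mod_group 2) 0 1"
  by (simp add: two_elt_def carrier_integer_mod_group atLeastLessThan_def; auto)


lemma galois_two:
  fixes S :: "(bool list \<Rightarrow> bool list) set" and n :: nat
  assumes lenS: "\<forall>s\<in>S. \<forall>w. length (s w) = length w"
    and flipS: "\<forall>s\<in>S. \<forall>w. w \<noteq> [] \<longrightarrow> s (flip w) = flip (s w)"
    and symm: "\<forall>s\<in>S. inv_into UNIV s \<in> S"
    and trans: "\<forall>u v. length u = length v \<longrightarrow> (\<exists>k\<in>gen_group S. k u = v)"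
  defines "V \<equiv> {w::bool list. length w = Suc n}"
    and "D \<equiv> S \<times> {w::bool list. length w = Suc n}"
  shows "two_elt (galois_group (schreier S (Suc n)) proj_V proj_D)
     (restrict id V, restrict id D)
     (restrict flip V, restrict (\<lambda>e. (fst e, flip (snd e))) D)"
    and "card (deck_transformations (schreier S (Suc n)) proj_V proj_D) = 2"
proof -
  have dk: "deck_transformations (schreier S (Suc n)) proj_V proj_D =
     {(restrict id V, restrict id D),
      (restrict flip V, restrict (\<lambda>e. (fst e, flip (snd e))) D)}"
    unfolding V_def D_def by (rule deck_eq[OF lenS flipS symm trans])
  have vs: "verts (schreier S (Suc n)) = V" "darts (schreier S (Suc n)) = D"
    by (simp_all add: schreier_def V_def D_def)
  have flV: "v \<in> V \<Longrightarrow> flip v \<in> V" for v unfolding V_def by (simp add: flip_def)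
  have nn: "v \<in> V \<Longrightarrow> v \<noteq> []" for v unfolding V_def by auto
  have eD: "e \<in> D \<Longrightarrow> (fst e, flip (snd e)) \<in> D" for e unfolding D_def by (auto simp: flip_def)
  have eD2: "e \<in> D \<Longrightarrow> snd e \<noteq> []" for e unfolding D_def by auto
  define v0 where "v0 = replicate (Suc n) False"
  have v0V: "v0 \<in> V" unfolding v0_def V_def by simp
  have neq: "restrict id V \<noteq> restrict flip V"
  proof
    assume "restrict id V = restrict flip V"
    then have "restrict id V v0 = restrict flip V v0" by simp
    then have "flip v0 = v0" using v0V by simp
    then show False using flip_neq nn[OF v0V] by blast
  qed
  have c1: "compose V (restrict id V) (restrict id V) = restrict id V"
    unfolding compose_def by (rule ext) auto
  have c2: "compose V (restrict id V) (restrict flip V) = restrict flip V"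
    unfolding compose_def by (rule ext) (auto simp: flV)
  have c3: "compose V (restrict flip V) (restrict id V) = restrict flip V"
    unfolding compose_def by (rule ext) auto
  have c4: "compose V (restrict flip V) (restrict flip V) = restrict id V"
    unfolding compose_def by (rule ext) (auto simp: flV nn)
  have d1: "compose D (restrict id D) (restrict id D) = restrict id D"
    unfolding compose_def by (rule ext) auto
  have d2: "compose D (restrict id D) (restrict (\<lambda>e. (fst e, flip (snd e))) D) = restrict (\<lambda>e. (fst e, flip (snd e))) D"
    unfolding compose_def by (rule ext) (auto simp: eD)
  have d3: "compose D (restrict (\<lambda>e. (fst e, flip (snd e))) D) (restrict id D) = restrict (\<lambda>e. (fst e, flip (snd e))) D"
    unfolding compose_def by (rule ext) auto
  have d4: "compose D (restrict (\<lambda>e. (fst e, flip (snd e))) D) (restrict (\<lambda>e. (fst e, flip (snd e))) D) = restrict id D"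
    unfolding compose_def by (rule ext) (auto simp: eD eD2)
  show "two_elt (galois_group (schreier S (Suc n)) proj_V proj_D)
     (restrict id V, restrict id D)
     (restrict flip V, restrict (\<lambda>e. (fst e, flip (snd e))) D)"
    unfolding two_elt_def galois_group_def vs
    using dk neq c1 c2 c3 c4 d1 d2 d3 d4 by simp
  show "card (deck_transformations (schreier S (Suc n)) proj_V proj_D) = 2"
    using dk neq by simp
qed

theorem corollary4p2:
  fixes Q :: "'q set" and tau :: "'q \<Rightarrow> bool \<Rightarrow> 'q" and lam :: "'q \<Rightarrow> bool \<Rightarrow> bool"
    and S :: "(bool list \<Rightarrow> bool list) set" and G :: "(bool list \<Rightarrow> bool list) set"
  assumes bounded: "bounded_automaton Q tau lam"
    and states: "\<forall>s\<in>S. \<exists>q\<in>Q. s = act tau lam q"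
    and S_finite: "finite S"
    and S_symm: "\<forall>s\<in>S. inv_into UNIV s \<in> S"
    and G_def: "G = gen_group S"
    and selfsim: "self_similar G"
    and transitive: "level_transitive G"
    and tiles: "\<forall>n. tile_connected S n"
  shows "\<forall>n\<ge>1.
           is_normal_covering (schreier S (n + 1)) (schreier S n) proj_V proj_D 2 \<and>
           galois_group (schreier S (n + 1)) proj_V proj_D \<cong> Psi_group S \<and>
           Psi_group S \<cong> integer_mod_group 2"
proof (intro allI impI)
  fix n :: nat
  have inv: "invertible_automaton Q tau lam" using bounded unfolding bounded_automaton_def by blast
  have lenS: "\<forall>s\<in>S. \<forall>w. length (s w) = length w"
  proof (intro ballI allI)
    fix s w assume sS: "s \<in> S"
    obtain q where "q \<in> Q" "s = act tau lam q" using bspec[OF states sS] by blast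
    then show "length (s w) = length w" by simp
  qed
  have flipS: "\<forall>s\<in>S. \<forall>w. w \<noteq> [] \<longrightarrow> s (flip w) = flip (s w)"
  proof (intro ballI allI impI)
    fix s and w :: "bool list" assume sS: "s \<in> S" and w: "w \<noteq> []"
    obtain q where q: "q \<in> Q" "s = act tau lam q" using bspec[OF states sS] by blast
    then show "s (flip w) = flip (s w)" using act_flip[OF inv q(1) w] by simp
  qed
  have butS: "\<forall>s\<in>S. \<forall>w. s (butlast w) = butlast (s w)"
  proof (intro ballI allI)
    fix s w assume sS: "s \<in> S"
    obtain q where q: "q \<in> Q" "s = act tau lam q" using bspec[OF states sS] by blast
    then show "s (butlast w) = butlast (s w)" using act_butlast by simp
  qed
  have trans: "\<forall>u v. length u = length v \<longrightarrow> (\<exists>k\<in>gen_group S. k u = v)"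
    using transitive unfolding level_transitive_def G_def .
  have np: "n + 1 = Suc n" by simp
  have cov: "is_covering (schreier S (Suc n)) (schreier S n) proj_V proj_D 2"
    by (rule covering[OF butS])
  have gt: "two_elt (galois_group (schreier S (Suc n)) proj_V proj_D)
     (restrict id {w::bool list. length w = Suc n}, restrict id (S \<times> {w::bool list. length w = Suc n}))
     (restrict flip {w::bool list. length w = Suc n},
      restrict (\<lambda>e. (fst e, flip (snd e))) (S \<times> {w::bool list. length w = Suc n}))"
    and cd: "card (deck_transformations (schreier S (Suc n)) proj_V proj_D) = 2"
    using galois_two[OF lenS flipS S_symm trans] by blast+
  have pt: "two_elt (Psi_group S) id Not"
    by (rule two_elt_psi[OF psi_set[OF inv states trans]])
  show "is_normal_covering (schreier S (n + 1)) (schreier S n) proj_V proj_D 2 \<and>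
           galois_group (schreier S (n + 1)) proj_V proj_D \<cong> Psi_group S \<and>
           Psi_group S \<cong> integer_mod_group 2"
    unfolding np is_normal_covering_def
    using cov cd two_elt_iso[OF gt pt] two_elt_iso[OF pt two_elt_Z2] by blast
qed

end
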